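(* Let $\|\cdot\|$ be a unitarily invariant norm on $\mathbb{M}_n$. (1) If $\|\cdot\|$ is an $M$-norm, then $\|\cdot\|=\alpha\|\cdot\|_\infty$ for some $\alpha>0$. (2) If $\|\cdot\|$ is an $L$-norm, then $\|\cdot\|=\alpha\|\cdot\|_1$ for some $\alpha>0$.
   Context: $\mathbb{M}_n$ is the algebra of complex $n\times n$ matrices with identity $I$; $\|\cdot\|_\infty$ is the operator norm and $\|A\|_1=\mathrm{Tr}(|A|)$ the trace norm. A norm is unitarily invariant if $\|UAV\|=\|A\|$ for all $A$ and all unitaries $U,V$. A norm $\|\cdot\|$ on $\mathbb{M}_n$ is an $M$-norm if $\left\|\sum_{i=1}^k C_i^*X_iC_i\right\|\le \max_{1\le i\le k}\|X_i\|$ for all $k$, all $X_i\in\mathbb{M}_n$ and all $C_i\in\mathbb{M}_n$ with $\sum_{i=1}^k C_i^*C_i=I$. It is an $L$-norm if $\sum_{i=1}^k\|C_iXC_i^*\|\le\|X\|$ for all $k$, all $X\in\mathbb{M}_n$ and all $C_i$ with $\sum_{i=1}^k C_i^*C_i=I$. *)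

theory Defs
  imports "HOL-Analysis.Analysis"
begin

text \<open>Complex n x n matrices are represented as complex^'n^'n, with the
  dimension n = CARD('n) given by an arbitrary finite index type.\<close>

definition cadj :: "complex^'n^'n \<Rightarrow> complex^'n^'n" where
  "cadj A = (\<chi> i j. cnj (A $ j $ i))"

definition unitary :: "complex^'n^'n \<Rightarrow> bool" where
  "unitary U \<longleftrightarrow> cadj U ** U = mat 1 \<and> U ** cadj U = mat 1"

definition psd :: "complex^'n^'n \<Rightarrow> bool" where
  "psd P \<longleftrightarrow> cadj P = P \<and>
     (\<forall>x::complex^'n. Re (\<Sum>i\<in>UNIV. cnj (x $ i) * (P *v x) $ i) \<ge> 0)"

definition mabs :: "complex^'n^'n \<Rightarrow> complex^'n^'n" where
  "mabs A = (THE P. psd P \<and> P ** P = cadj A ** A)"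

text \<open>Trace norm ||A||_1 = Tr |A| (a real number since |A| is psd).\<close>
definition trace_norm :: "complex^'n^'n \<Rightarrow> real" where
  "trace_norm A = Re (trace (mabs A))"

definition op_norm :: "complex^'n^'n \<Rightarrow> real" where
  "op_norm A = onorm (\<lambda>x::complex^'n. A *v x)"

definition cscale :: "complex \<Rightarrow> complex^'n^'n \<Rightarrow> complex^'n^'n" where
  "cscale c A = (\<chi> i j. c * A $ i $ j)"

definition is_matrix_norm :: "(complex^'n^'n \<Rightarrow> real) \<Rightarrow> bool" where
  "is_matrix_norm N \<longleftrightarrow>
     (\<forall>A. N A \<ge> 0) \<and> (\<forall>A. N A = 0 \<longleftrightarrow> A = 0) \<and>
     (\<forall>c A. N (cscale c A) = cmod c * N A) \<and>
     (\<forall>A B. N (A + B) \<le> N A + N B)"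

definition unitarily_invariant :: "(complex^'n^'n \<Rightarrow> real) \<Rightarrow> bool" where
  "unitarily_invariant N \<longleftrightarrow> (\<forall>A U V. unitary U \<longrightarrow> unitary V \<longrightarrow> N (U ** A ** V) = N A)"

definition M_norm :: "(complex^'n^'n \<Rightarrow> real) \<Rightarrow> bool" where
  "M_norm N \<longleftrightarrow> (\<forall>(k::nat) (X::nat \<Rightarrow> complex^'n^'n) (C::nat \<Rightarrow> complex^'n^'n).
     (\<Sum>i<k. cadj (C i) ** C i) = mat 1 \<longrightarrow>
     N (\<Sum>i<k. cadj (C i) ** X i ** C i) \<le> Max ((\<lambda>i. N (X i)) ` {..<k}))"

definition L_norm :: "(complex^'n^'n \<Rightarrow> real) \<Rightarrow> bool" where
  "L_norm N \<longleftrightarrow> (\<forall>(k::nat) (X::complex^'n^'n) (C::nat \<Rightarrow> complex^'n^'n).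
     (\<Sum>i<k. cadj (C i) ** C i) = mat 1 \<longrightarrow>
     (\<Sum>i<k. N (C i ** X ** cadj (C i))) \<le> N X)"

end

theory Submission imports Defs begin

lemma quad_zero:
  fixes a b :: real
  assumes "\<And>t. a * t + b * t^2 \<le> 0"
  shows "a = 0"
proof (rule ccontr)
  assume a: "a \<noteq> 0"
  define s where "s = 1 / (\<bar>b\<bar> + 1)"
  have bp: "\<bar>b\<bar> + 1 > 0" by linarith
  have s: "s > 0" unfolding s_def using bp by (rule divide_pos_pos[OF zero_less_one])
  have "\<bar>b\<bar> * s = \<bar>b\<bar> / (\<bar>b\<bar> + 1)" unfolding s_def by simp
  also have "\<dots> < 1" using bp by (subst divide_less_eq_1_pos) auto
  finally have "\<bar>b\<bar> * s < 1" .
  hence "\<bar>b * s\<bar> < 1" using s by (simp add: abs_mult)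
  hence p1: "1 + b * s > 0" by linarith
  have "a^2 > 0" using a by simp
  hence p2: "a^2 * s > 0" using s by (rule mult_pos_pos)
  have "a * (a * s) + b * (a * s)^2 = (a^2 * s) * (1 + b * s)"
    by (simp add: algebra_simps power2_eq_square)
  also have "\<dots> > 0" using p2 p1 by (rule mult_pos_pos)
  finally show False using assms[of "a * s"] by linarith
qed


definition cinner :: "complex^'n \<Rightarrow> complex^'n \<Rightarrow> complex" where
  "cinner x y = (\<Sum>i\<in>UNIV. cnj (x$i) * y$i)"

lemma cadj_cadj[simp]: "cadj (cadj A) = A"
  by (simp add: cadj_def vec_eq_iff)

lemma cadj_mult: "cadj (A ** B) = cadj B ** cadj A"
  unfolding cadj_def matrix_matrix_mult_def
  by (simp add: vec_eq_iff cnj_sum mult.commute)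

lemma cadj_mat1[simp]: "cadj (mat 1) = mat 1"
  by (simp add: cadj_def mat_def vec_eq_iff)

lemma cadj_add: "cadj (A + B) = cadj A + cadj B"
  by (simp add: cadj_def vec_eq_iff)

lemma cadj_zero[simp]: "cadj 0 = 0"
  by (simp add: cadj_def vec_eq_iff)

lemma cinner_mv: "cinner x (A *v y) = cinner (cadj A *v x) y"
proof -
  have "cinner x (A *v y) = (\<Sum>i\<in>UNIV. \<Sum>j\<in>UNIV. cnj (x$i) * A$i$j * y$j)"
    unfolding cinner_def matrix_vector_mult_def by (simp add: sum_distrib_left mult.assoc)
  also have "\<dots> = (\<Sum>j\<in>UNIV. \<Sum>i\<in>UNIV. cnj (x$i) * A$i$j * y$j)"
    by (rule sum.swap)
  also have "\<dots> = cinner (cadj A *v x) y"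
    unfolding cinner_def matrix_vector_mult_def cadj_def
    by (simp add: sum_distrib_left sum_distrib_right cnj_sum mult.commute mult.left_commute)
  finally show ?thesis .
qed

lemma cinner_add_left: "cinner (a + b) c = cinner a c + cinner b c"
  by (simp add: cinner_def sum.distrib algebra_simps)
lemma cinner_add_right: "cinner a (b + c) = cinner a b + cinner a c"
  by (simp add: cinner_def sum.distrib algebra_simps)
lemma cinner_diff_left: "cinner (a - b) c = cinner a c - cinner b c"
  by (simp add: cinner_def sum_subtractf algebra_simps)
lemma cinner_diff_right: "cinner a (b - c) = cinner a b - cinner a c"
  by (simp add: cinner_def sum_subtractf algebra_simps)
lemma cinner_scale_left: "cinner (k *s a) c = cnj k * cinner a c"
  by (simp add: cinner_def sum_distrib_left algebra_simps)
lemma cinner_scale_right: "cinner a (k *s c) = k * cinner a c"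
  by (simp add: cinner_def sum_distrib_left algebra_simps)
lemma cinner_cnj: "cnj (cinner a b) = cinner b a"
  by (simp add: cinner_def mult.commute)
lemma cinner_zero_left[simp]: "cinner 0 a = 0" by (simp add: cinner_def)
lemma cinner_zero_right[simp]: "cinner a 0 = 0" by (simp add: cinner_def)

lemma cinner_self: "cinner x x = complex_of_real ((norm x)^2)"
proof -
  have "cinner x x = (\<Sum>i\<in>UNIV. complex_of_real ((cmod (x$i))^2))"
    unfolding cinner_def by (intro sum.cong refl) (simp only: complex_norm_square mult.commute)
  also have "\<dots> = complex_of_real (\<Sum>i\<in>UNIV. (cmod (x$i))^2)"
    by (simp only: of_real_sum)
  also have "(\<Sum>i\<in>UNIV. (cmod (x$i))^2) = (norm x)^2"
    by (simp add: norm_vec_def L2_set_def sum_nonneg)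
  finally show ?thesis .
qed

lemma cinner_self_eq0: "cinner x x = 0 \<longleftrightarrow> x = 0"
  by (simp add: cinner_self)

lemma mv_add: "A *v (x + y) = A *v x + A *v (y::complex^'n)"
  by (simp add: matrix_vector_right_distrib)
lemma mv_scale: "A *v (k *s (x::complex^'n)) = k *s (A *v x)"
  by (simp add: vec_eq_iff matrix_vector_mult_def sum_distrib_left algebra_simps)
lemma mv_diff: "A *v (x - y) = A *v x - A *v (y::complex^'n)"
  by (simp add: vec_eq_iff matrix_vector_mult_def sum_subtractf algebra_simps)

lemma cont_vec_nth[continuous_intros]: 
  fixes f :: "'a::topological_space \<Rightarrow> 'b::real_normed_vector^'n"
  shows "continuous_on S f \<Longrightarrow> continuous_on S (\<lambda>x. f x $ i)"
proof -
  assume "continuous_on S f"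
  moreover have "continuous_on (f ` S) (\<lambda>x. x $ i)"
    by (rule linear_continuous_on) (rule bounded_linear_vec_nth)
  ultimately show ?thesis using continuous_on_compose[of S f "\<lambda>x. x $ i"] by (simp add: o_def)
qed

lemma cont_cinner: "continuous_on S (\<lambda>z. cinner a (f z))" if "continuous_on S f"
  unfolding cinner_def by (intro continuous_intros that)

lemma scaleR_cs: "r *\<^sub>R (v::complex^'n) = complex_of_real r *s v"
  by (simp add: vec_eq_iff) (simp add: scaleR_conv_of_real)

lemma cinner_sum_right: "cinner a (\<Sum>i\<in>S. f i) = (\<Sum>i\<in>S. cinner a (f i))"
  by (induction S rule: infinite_finite_induct) (auto simp: cinner_add_right)

lemma cinner_sum_left: "cinner (\<Sum>i\<in>S. f i) a = (\<Sum>i\<in>S. cinner (f i) a)"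
  by (induction S rule: infinite_finite_induct) (auto simp: cinner_add_left)

definition orthonormal_on :: "'n set \<Rightarrow> ('n \<Rightarrow> complex^'m) \<Rightarrow> bool" where
  "orthonormal_on S u \<longleftrightarrow> (\<forall>i\<in>S. \<forall>j\<in>S. cinner (u i) (u j) = (if i = j then 1 else 0))"

lemma cinner_axis: "cinner a (axis k 1) = cnj (a $ k)"
  unfolding cinner_def axis_def by (simp add: if_distrib cong: if_cong)

lemma W_nonzero:
  fixes u :: "'n \<Rightarrow> complex^'n"
  assumes on: "orthonormal_on S u" and S: "S \<noteq> UNIV"
  shows "\<exists>z. z \<noteq> 0 \<and> (\<forall>i\<in>S. cinner (u i) z = 0)"
proof (rule ccontr)
  assume H: "\<not> ?thesis"
  have fS: "finite S" by simp
  have key: "(\<Sum>i\<in>S. cnj (u i $ k) * u i $ k) = 1" for k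
  proof -
    define z where "z = axis k 1 - (\<Sum>i\<in>S. cinner (u i) (axis k 1) *s u i)"
    have "cinner (u j) z = 0" if "j \<in> S" for j
    proof -
      have "(\<Sum>i\<in>S. cinner (u j) (cinner (u i) (axis k 1) *s u i)) =
            (\<Sum>i\<in>S. (if i = j then cinner (u j) (axis k 1) else 0))"
        using on that unfolding orthonormal_on_def
        by (intro sum.cong refl) (auto simp: cinner_scale_right)
      also have "\<dots> = cinner (u j) (axis k 1)" using that fS by simp
      finally show ?thesis unfolding z_def by (simp add: cinner_diff_right cinner_sum_right)
    qed
    with H have "z = 0" by blast
    hence "axis k 1 = (\<Sum>i\<in>S. cinner (u i) (axis k 1) *s u i)" unfolding z_def by simp
    hence "(axis k (1::complex)) $ k = (\<Sum>i\<in>S. cinner (u i) (axis k 1) *s u i) $ k" by simp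
    thus ?thesis by (simp add: cinner_axis sum_component)
  qed
  have "of_nat CARD('n) = (\<Sum>k\<in>UNIV. (\<Sum>i\<in>S. cnj (u i $ k) * u i $ k))"
    using key by simp
  also have "\<dots> = (\<Sum>i\<in>S. cinner (u i) (u i))"
    unfolding cinner_def by (rule sum.swap)
  also have "\<dots> = of_nat (card S)" using on unfolding orthonormal_on_def by simp
  finally have "CARD('n) = card S" by (metis of_nat_eq_iff)
  moreover have "card S < CARD('n)" using S by (simp add: psubset_card_mono psubsetI)
  ultimately show False by simp
qed


lemma cinner_scaleR_left: "cinner (r *\<^sub>R a) b = complex_of_real r * cinner a b"
  by (simp add: scaleR_cs cinner_scale_left)
lemma cinner_scaleR_right: "cinner a (r *\<^sub>R b) = complex_of_real r * cinner a b"
  by (simp add: scaleR_cs cinner_scale_right)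
lemma mv_scaleR: "A *v (r *\<^sub>R (x::complex^'n)) = r *\<^sub>R (A *v x)"
  by (simp add: scaleR_cs mv_scale)
lemma norm_sq_cinner: "(norm x)^2 = Re (cinner x x)"
  by (simp add: cinner_self)

lemma cinner_herm: "cadj H = H \<Longrightarrow> cinner x (H *v y) = cinner (H *v x) y"
  by (metis cinner_mv)

lemma cont_quad: "continuous_on S (\<lambda>z. Re (cinner z (H *v z)))"
proof -
  have e: "cinner z (H *v z) = (\<Sum>i\<in>UNIV. \<Sum>j\<in>UNIV. cnj (z$i) * (H$i$j * z$j))" for z
    by (simp add: cinner_def matrix_vector_mult_def sum_distrib_left)
  show ?thesis unfolding e by (intro continuous_intros)
qed

lemma eigen_in_W:
  fixes H :: "complex^'n^'n" and u :: "'n \<Rightarrow> complex^'n"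
  assumes herm: "cadj H = H" and on: "orthonormal_on S u"
    and eig: "\<forall>i\<in>S. H *v u i = complex_of_real (l i) *s u i" and S: "S \<noteq> UNIV"
  shows "\<exists>x lam. cinner x x = 1 \<and> (\<forall>i\<in>S. cinner (u i) x = 0) \<and> H *v x = complex_of_real lam *s x"
proof -
  define W where "W = {z. \<forall>i\<in>S. cinner (u i) z = 0}"
  have W_add: "a + b \<in> W" if "a \<in> W" "b \<in> W" for a b
    using that unfolding W_def by (simp add: cinner_add_right)
  have W_scaleR: "r *\<^sub>R a \<in> W" if "a \<in> W" for a r
    using that unfolding W_def by (simp add: cinner_scaleR_right)
  have closedW: "closed W"
  proof -
    have "W = (\<Inter>i\<in>S. {z. cinner (u i) z = 0})" unfolding W_def by auto
    moreover have "closed {z. cinner (u i) z = 0}" for i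
    proof -
      have "continuous_on UNIV (\<lambda>z. cinner (u i) z)" by (rule cont_cinner[OF continuous_on_id])
      from continuous_closed_preimage_constant[OF this closed_UNIV, of 0] show ?thesis by simp
    qed
    ultimately show ?thesis by auto
  qed
  define K where "K = W \<inter> sphere 0 1"
  have cK: "compact K" unfolding K_def using closedW by (intro closed_Int_compact) auto
  obtain z where z: "z \<noteq> 0" "z \<in> W" using W_nonzero[OF on S] unfolding W_def by blast
  have "(1 / norm z) *\<^sub>R z \<in> K" unfolding K_def using z W_scaleR by simp
  hence Kne: "K \<noteq> {}" by blast
  define f where "f z = Re (cinner z (H *v z))" for z
  have "continuous_on K f" unfolding f_def by (rule cont_quad)
  then obtain x where x: "x \<in> K" "\<forall>y\<in>K. f y \<le> f x"
    using continuous_attains_sup[OF cK Kne] by blast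
  define lam where "lam = f x"
  have xW: "x \<in> W" and nx: "norm x = 1" using x(1) unfolding K_def by auto
  have cxx: "cinner x x = 1" using nx by (simp add: cinner_self)
  have bound: "Re (cinner w (H *v w)) \<le> lam * (norm w)^2" if "w \<in> W" for w
  proof (cases "w = 0")
    case True thus ?thesis by simp
  next
    case False
    define r where "r = 1 / norm w"
    have r: "r > 0" "r * norm w = 1" using False unfolding r_def by auto
    have "r *\<^sub>R w \<in> K" unfolding K_def using that W_scaleR r by (simp add: r_def)
    hence "f (r *\<^sub>R w) \<le> lam" using x(2) unfolding lam_def by blast
    hence "r^2 * Re (cinner w (H *v w)) \<le> lam"
      unfolding f_def by (simp add: cinner_scaleR_left cinner_scaleR_right mv_scaleR power2_eq_square mult.assoc)
    hence le: "(norm w)^2 * (r^2 * Re (cinner w (H *v w))) \<le> (norm w)^2 * lam"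
      by (simp add: mult_left_mono)
    have one: "(norm w)^2 * r^2 = 1" using r by (simp add: power_mult_distrib[symmetric] mult.commute)
    have "Re (cinner w (H *v w)) = ((norm w)^2 * r^2) * Re (cinner w (H *v w))" by (simp only: one mult_1_left)
    also have "\<dots> = (norm w)^2 * (r^2 * Re (cinner w (H *v w)))" by (rule mult.assoc)
    also have "\<dots> \<le> (norm w)^2 * lam" by (rule le)
    finally show ?thesis by (simp only: mult.commute)
  qed
  define v where "v = H *v x - complex_of_real lam *s x"
  have vW: "v \<in> W" unfolding W_def mem_Collect_eq
  proof (intro ballI)
    fix i assume i: "i \<in> S"
    have "cinner (u i) (H *v x) = cinner (H *v u i) x" by (rule cinner_herm[OF herm])
    also have "\<dots> = 0" using eig i xW unfolding W_def by (simp add: cinner_scale_left)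
    finally show "cinner (u i) v = 0" using i xW unfolding v_def W_def
      by (simp add: cinner_diff_right cinner_scale_right)
  qed
  have Hx: "H *v x = v + complex_of_real lam *s x" unfolding v_def by simp
  have h1: "cinner x (H *v v) = cinner v v + complex_of_real lam * cinner x v"
    by (simp add: cinner_herm[OF herm] Hx cinner_add_left cinner_scale_left)
  have h2: "cinner v (H *v x) = cinner v v + complex_of_real lam * cinner v x"
    by (simp add: Hx cinner_add_right cinner_scale_right)
  have h3: "Re (cinner x (H *v x)) = lam" unfolding lam_def f_def ..
  define a where "a = Re (cinner v v)"
  define q where "q = Re (cinner v (H *v v))"
  define p where "p = Re (cinner x v) + Re (cinner v x)"
  have ineq: "2 * a * t + (q - lam * a) * t^2 \<le> 0" for t
  proof -
    define w where "w = x + t *\<^sub>R v"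
    have "w \<in> W" unfolding w_def using xW vW W_add W_scaleR by blast
    from bound[OF this] have B: "Re (cinner w (H *v w)) \<le> lam * Re (cinner w w)"
      by (simp add: norm_sq_cinner)
    have L: "Re (cinner w (H *v w)) = lam + 2*t*a + t*lam*p + t^2*q"
      unfolding w_def using h1 h2 h3
      by (simp add: cinner_add_left cinner_add_right cinner_scaleR_left cinner_scaleR_right
          mv_add mv_scaleR a_def p_def q_def algebra_simps power2_eq_square)
    have R: "Re (cinner w w) = 1 + t*p + t^2*a"
      unfolding w_def using cxx
      by (simp add: cinner_add_left cinner_add_right cinner_scaleR_left cinner_scaleR_right
          a_def p_def algebra_simps power2_eq_square)
    show ?thesis using B unfolding L R by (simp add: algebra_simps power2_eq_square)
  qed
  have "2 * a = 0" using quad_zero[of "2*a" "q - lam * a"] ineq by (simp add: mult.commute)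
  hence "cinner v v = 0" unfolding a_def by (simp add: cinner_self)
  hence "v = 0" by (simp add: cinner_self_eq0)
  hence "H *v x = complex_of_real lam *s x" using Hx by simp
  thus ?thesis using cxx xW unfolding W_def by blast
qed


lemma spectral_extend:
  fixes H :: "complex^'n^'n" and u :: "'n \<Rightarrow> complex^'n"
  assumes herm: "cadj H = H"
  shows "orthonormal_on S u \<Longrightarrow> (\<forall>i\<in>S. H *v u i = complex_of_real (l i) *s u i) \<Longrightarrow>
    \<exists>u' l'. orthonormal_on UNIV u' \<and> (\<forall>i. H *v u' i = complex_of_real (l' i) *s u' i) \<and> (\<forall>i\<in>S. u' i = u i)"
proof (induction "card (UNIV - S)" arbitrary: S u l)
  case 0
  have "finite (UNIV - S)" by simp
  then have "UNIV - S = {}" using 0(1) by (metis card_0_eq)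
  then have "S = UNIV" by blast
  thus ?case using 0 by blast
next
  case (Suc n)
  hence S: "S \<noteq> UNIV" by auto
  then obtain j where j: "j \<notin> S" by blast
  obtain x lam where x: "cinner x x = 1" "\<forall>i\<in>S. cinner (u i) x = 0" "H *v x = complex_of_real lam *s x"
    using eigen_in_W[OF herm Suc.prems(1) Suc.prems(2) S] by blast
  define u2 where "u2 = u(j := x)"
  define l2 where "l2 = l(j := lam)"
  have c: "n = card (UNIV - insert j S)"
  proof -
    have "UNIV - insert j S = (UNIV - S) - {j}" by blast
    moreover have "j \<in> UNIV - S" using j by blast
    ultimately show ?thesis using Suc.hyps(2) by simp
  qed
  have on2: "orthonormal_on (insert j S) u2"
    unfolding orthonormal_on_def
  proof (intro ballI)
    fix i k assume i: "i \<in> insert j S" and k: "k \<in> insert j S"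
    show "cinner (u2 i) (u2 k) = (if i = k then 1 else 0)"
    proof (cases "i = j")
      case True
      show ?thesis
      proof (cases "k = j")
        case True thus ?thesis using \<open>i = j\<close> x(1) unfolding u2_def by simp
      next
        case False
        hence "k \<in> S" using k by simp
        hence "cinner x (u k) = 0" using x(2) cinner_cnj[of "u k" x] by simp
        thus ?thesis using \<open>i = j\<close> False unfolding u2_def by simp
      qed
    next
      case False
      hence iS: "i \<in> S" using i by simp
      show ?thesis
      proof (cases "k = j")
        case True thus ?thesis using False x(2) iS unfolding u2_def by simp
      next
        case kj: False
        hence "k \<in> S" using k by simp
        thus ?thesis using Suc.prems(1) iS False kj unfolding u2_def orthonormal_on_def by simp
      qed
    qed
  qed
  have eig2: "\<forall>i\<in>insert j S. H *v u2 i = complex_of_real (l2 i) *s u2 i"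
    using Suc.prems(2) x(3) j unfolding u2_def l2_def by auto
  obtain u' l' where R: "orthonormal_on UNIV u'" "\<forall>i. H *v u' i = complex_of_real (l' i) *s u' i"
      "\<forall>i\<in>insert j S. u' i = u2 i"
    using Suc.hyps(1)[OF c on2 eig2] by blast
  have "\<forall>i\<in>S. u' i = u i" using R(3) j unfolding u2_def by auto
  thus ?case using R(1,2) by blast
qed

definition ucols :: "('n \<Rightarrow> complex^'n) \<Rightarrow> complex^'n^'n" where
  "ucols u = (\<chi> r c. u c $ r)"

definition diagm :: "('n \<Rightarrow> complex) \<Rightarrow> complex^'n^'n" where
  "diagm d = (\<chi> i j. if i = j then d i else 0)"

lemma ucols_adj_mult: "cadj (ucols u) ** ucols u = (\<chi> i j. cinner (u i) (u j))"
  by (simp add: cadj_def ucols_def matrix_matrix_mult_def cinner_def vec_eq_iff)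

lemma unitary_ucols:
  assumes "orthonormal_on UNIV u" shows "unitary (ucols u)"
proof -
  have "cadj (ucols u) ** ucols u = mat 1"
    using assms unfolding ucols_adj_mult orthonormal_on_def by (simp add: vec_eq_iff mat_def)
  thus ?thesis unfolding unitary_def using matrix_left_right_inverse by blast
qed

lemma mult_ucols: "A ** ucols u = ucols (\<lambda>c. A *v u c)"
  by (simp add: ucols_def matrix_matrix_mult_def matrix_vector_mult_def vec_eq_iff)

lemma ucols_diag: "ucols u ** diagm d = ucols (\<lambda>c. d c *s u c)"
  by (simp add: ucols_def diagm_def matrix_matrix_mult_def vec_eq_iff if_distrib if_distribR
      mult.commute cong: if_cong)

lemma unitary_right: "unitary U \<Longrightarrow> U ** cadj U = mat 1"
  and unitary_left: "unitary U \<Longrightarrow> cadj U ** U = mat 1"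
  by (simp_all add: unitary_def)

lemma spectral:
  fixes H :: "complex^'n^'n"
  assumes herm: "cadj H = H"
  shows "\<exists>U l. unitary U \<and> H = U ** diagm (\<lambda>i. complex_of_real (l i)) ** cadj U"
proof -
  have emp: "orthonormal_on {} (\<lambda>_::'n. 0::complex^'n)" by (simp add: orthonormal_on_def)
  obtain u :: "'n \<Rightarrow> complex^'n" and l where R: "orthonormal_on UNIV u" "\<forall>i. H *v u i = complex_of_real (l i) *s u i"
  proof -
    have "\<exists>(u'::'n \<Rightarrow> complex^'n) l'. orthonormal_on UNIV u' \<and> (\<forall>i. H *v u' i = complex_of_real (l' i) *s u' i)"
      using spectral_extend[OF herm emp, of "\<lambda>_. 0"] by blast
    thus ?thesis using that by blast
  qed
  define U where "U = ucols u"
  have U: "unitary U" unfolding U_def by (rule unitary_ucols[OF R(1)])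
  have "H ** U = U ** diagm (\<lambda>i. complex_of_real (l i))"
    unfolding U_def mult_ucols ucols_diag using R(2) by simp
  hence "H ** U ** cadj U = U ** diagm (\<lambda>i. complex_of_real (l i)) ** cadj U" by simp
  hence "H = U ** diagm (\<lambda>i. complex_of_real (l i)) ** cadj U"
    by (simp add: matrix_mul_assoc[symmetric] unitary_right[OF U])
  thus ?thesis using U by blast
qed


lemma cinner_AA: "cinner x ((cadj A ** A) *v y) = cinner (A *v x) (A *v y)"
  by (simp add: matrix_vector_mul_assoc[symmetric] cinner_mv)

lemma herm_AA: "cadj (cadj A ** A) = cadj A ** A"
  by (simp add: cadj_mult)

lemma svd:
  fixes A :: "complex^'n^'n"
  shows "\<exists>U V s. unitary U \<and> unitary V \<and> (\<forall>i. s i \<ge> 0) \<and>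
     A = U ** diagm (\<lambda>i. complex_of_real (s i)) ** cadj V"
proof -
  have emp: "orthonormal_on {} (\<lambda>_::'n. 0::complex^'n)" by (simp add: orthonormal_on_def)
  obtain v :: "'n \<Rightarrow> complex^'n" and lam where R: "orthonormal_on UNIV v"
    "\<forall>i. (cadj A ** A) *v v i = complex_of_real (lam i) *s v i"
  proof -
    have "\<exists>(u'::'n \<Rightarrow> complex^'n) l'. orthonormal_on UNIV u' \<and> (\<forall>i. (cadj A ** A) *v u' i = complex_of_real (l' i) *s u' i)"
      using spectral_extend[OF herm_AA[of A] emp, where l="\<lambda>_. 0"] by blast
    thus ?thesis using that by blast
  qed
  have inner: "cinner (A *v v i) (A *v v j) = (if i = j then complex_of_real (lam i) else 0)" for i j
  proof -
    have "cinner (A *v v i) (A *v v j) = cinner (v i) ((cadj A ** A) *v v j)" by (simp add: cinner_AA)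
    also have "\<dots> = complex_of_real (lam j) * cinner (v i) (v j)" using R(2) by (simp add: cinner_scale_right)
    finally show ?thesis using R(1) unfolding orthonormal_on_def by auto
  qed
  have lam0: "lam i \<ge> 0" for i
  proof -
    have "complex_of_real (lam i) = complex_of_real ((norm (A *v v i))^2)"
      using inner[of i i] by (simp add: cinner_self)
    hence "lam i = (norm (A *v v i))^2" by (simp only: of_real_eq_iff)
    thus ?thesis by simp
  qed
  define s where "s i = sqrt (lam i)" for i
  define S0 where "S0 = {i. lam i > 0}"
  define w where "w i = (1 / s i) *\<^sub>R (A *v v i)" for i
  have onw: "orthonormal_on S0 w" unfolding orthonormal_on_def
  proof (intro ballI)
    fix i j assume i: "i \<in> S0" and j: "j \<in> S0"
    have "cinner (w i) (w j) = complex_of_real (1 / s i) * complex_of_real (1 / s j) * cinner (A *v v i) (A *v v j)"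
      unfolding w_def by (simp add: cinner_scaleR_left cinner_scaleR_right)
    also have "\<dots> = (if i = j then 1 else 0)"
    proof (cases "i = j")
      case True
      have "s i * s i = lam i" unfolding s_def using lam0[of i] by (simp add: real_sqrt_mult[symmetric])
      moreover have "lam i > 0" using i unfolding S0_def by simp
      ultimately have "(1 / s i) * (1 / s i) * lam i = 1"
        by (metis divide_divide_eq_left divide_self_if less_irrefl times_divide_eq_left mult_1)
      hence "complex_of_real (1 / s i) * complex_of_real (1 / s i) * complex_of_real (lam i) = 1"
        by (metis of_real_1 of_real_mult)
      thus ?thesis using True inner[of i i] by simp
    qed (simp add: inner)
    finally show "cinner (w i) (w j) = (if i = j then 1 else 0)" .
  qed
  have herm0: "cadj (0::complex^'n^'n) = 0" by simp
  obtain u :: "'n \<Rightarrow> complex^'n" where U: "orthonormal_on UNIV u" "\<forall>i\<in>S0. u i = w i"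
  proof -
    have "\<exists>(u'::'n \<Rightarrow> complex^'n) l'. orthonormal_on UNIV u' \<and> (\<forall>i. (0::complex^'n^'n) *v u' i = complex_of_real (l' i) *s u' i) \<and> (\<forall>i\<in>S0. u' i = w i)"
      using spectral_extend[OF herm0 onw, where l="\<lambda>_. 0"] by simp
    thus ?thesis using that by blast
  qed
  have col: "A *v v c = complex_of_real (s c) *s u c" for c
  proof (cases "lam c > 0")
    case True
    hence "s c > 0" unfolding s_def by simp
    hence "u c = (1 / s c) *\<^sub>R (A *v v c)" using U(2) True unfolding S0_def w_def by simp
    hence "complex_of_real (s c) *s u c = (s c * (1 / s c)) *\<^sub>R (A *v v c)"
      by (simp add: scaleR_cs vector_smult_assoc)
    thus ?thesis using \<open>s c > 0\<close> by simp
  next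
    case False
    hence "lam c = 0" using lam0[of c] by simp
    hence "cinner (A *v v c) (A *v v c) = 0" using inner[of c c] by simp
    hence "A *v v c = 0" by (simp add: cinner_self_eq0)
    moreover have "s c = 0" unfolding s_def using \<open>lam c = 0\<close> by simp
    ultimately show ?thesis by simp
  qed
  define V where "V = ucols v"
  define U where "U = ucols u"
  have uV: "unitary V" unfolding V_def by (rule unitary_ucols[OF R(1)])
  have uU: "unitary U" unfolding U_def by (rule unitary_ucols[OF U(1)])
  have "A ** V = U ** diagm (\<lambda>i. complex_of_real (s i))"
    unfolding V_def U_def mult_ucols ucols_diag using col by simp
  hence "A ** V ** cadj V = U ** diagm (\<lambda>i. complex_of_real (s i)) ** cadj V" by simp
  hence "A = U ** diagm (\<lambda>i. complex_of_real (s i)) ** cadj V"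
    by (simp add: matrix_mul_assoc[symmetric] unitary_right[OF uV])
  moreover have "\<forall>i. s i \<ge> 0" unfolding s_def using lam0 by simp
  ultimately show ?thesis using uU uV by blast
qed

lemma unitary_cadj: "unitary U \<Longrightarrow> unitary (cadj U)"
  by (simp add: unitary_def)

lemma unitary_norm: "unitary U \<Longrightarrow> norm (U *v x) = norm x"
proof -
  assume u: "unitary U"
  have "cinner (U *v x) (U *v x) = cinner x x"
    by (simp add: cinner_mv matrix_vector_mul_assoc unitary_left[OF u])
  hence "complex_of_real ((norm (U *v x))^2) = complex_of_real ((norm x)^2)" by (simp only: cinner_self)
  hence "(norm (U *v x))^2 = (norm x)^2" by (simp only: of_real_eq_iff)
  thus ?thesis by (simp add: power2_eq_iff_nonneg)
qed

lemma diag_mv: "diagm d *v y = (\<chi> i. d i * y$i)"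
  by (simp add: diagm_def matrix_vector_mult_def vec_eq_iff if_distrib if_distribR cong: if_cong)

lemma norm_axis_c: "norm (axis j (1::complex)) = 1"
proof -
  have "complex_of_real ((norm (axis j (1::complex)))^2) = 1"
    by (simp only: cinner_self[symmetric] cinner_axis) (simp add: axis_def)
  hence "(norm (axis j (1::complex)))^2 = 1" by (metis of_real_eq_1_iff)
  thus ?thesis by (simp add: power2_eq_1_iff)
qed

lemma op_norm_svd:
  fixes s :: "'n::finite \<Rightarrow> real"
  assumes U: "unitary U" and V: "unitary V" and s: "\<forall>i. s i \<ge> 0"
  shows "op_norm (U ** diagm (\<lambda>i. complex_of_real (s i)) ** cadj V) = Max (range s)"
proof -
  define D where "D = diagm (\<lambda>i. complex_of_real (s i))"
  define m where "m = Max (range s)"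
  have sm: "s i \<le> m" for i unfolding m_def by simp
  have m0: "m \<ge> 0" using s sm by (meson order_trans)
  have Ax: "(U ** D ** cadj V) *v x = U *v (D *v (cadj V *v x))" for x
    by (simp add: matrix_vector_mul_assoc matrix_mul_assoc)
  have Dle: "norm (D *v y) \<le> m * norm y" for y
  proof -
    have "norm (D *v y) \<le> norm (m *\<^sub>R y)"
    proof (rule norm_le_componentwise_cart)
      fix i
      have "norm ((D *v y) $ i) = s i * norm (y $ i)" unfolding D_def diag_mv using s by (simp add: norm_mult)
      also have "\<dots> \<le> m * norm (y $ i)" by (rule mult_right_mono[OF sm norm_ge_zero])
      also have "\<dots> = norm ((m *\<^sub>R y) $ i)" using m0 by simp
      finally show "norm ((D *v y) $ i) \<le> norm ((m *\<^sub>R y) $ i)" .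
    qed
    also have "\<dots> = m * norm y" using m0 by simp
    finally show ?thesis .
  qed
  have "onorm (\<lambda>x. (U ** D ** cadj V) *v x) \<le> m"
  proof (rule onorm_le)
    fix x
    have "norm ((U ** D ** cadj V) *v x) = norm (D *v (cadj V *v x))" unfolding Ax by (simp add: unitary_norm[OF U])
    also have "\<dots> \<le> m * norm (cadj V *v x)" by (rule Dle)
    also have "\<dots> = m * norm x" by (simp add: unitary_norm[OF unitary_cadj[OF V]])
    finally show "norm ((U ** D ** cadj V) *v x) \<le> m * norm x" .
  qed
  moreover have "m \<le> onorm (\<lambda>x. (U ** D ** cadj V) *v x)"
  proof -
    have "Max (range s) \<in> range s" by (rule Max_in) auto
    then obtain j where "Max (range s) = s j" by (rule rangeE)
    hence j: "s j = m" unfolding m_def by simp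
    define x where "x = V *v axis j 1"
    have "cadj V *v x = axis j 1" unfolding x_def by (simp add: matrix_vector_mul_assoc unitary_left[OF V])
    hence "(U ** D ** cadj V) *v x = U *v (D *v axis j 1)" unfolding Ax by simp
    hence "norm ((U ** D ** cadj V) *v x) = norm (D *v axis j 1)" by (simp add: unitary_norm[OF U])
    also have "D *v axis j 1 = complex_of_real (s j) *s axis j 1"
      unfolding D_def diag_mv by (simp add: vec_eq_iff axis_def)
    also have "\<dots> = s j *\<^sub>R axis j 1" by (simp add: scaleR_cs)
    finally have "norm ((U ** D ** cadj V) *v x) = m" using j m0 by (simp add: norm_axis_c)
    moreover have "norm x = 1" unfolding x_def by (simp add: unitary_norm[OF V] norm_axis_c)
    moreover have "norm ((U ** D ** cadj V) *v x) \<le> onorm (\<lambda>x. (U ** D ** cadj V) *v x) * norm x"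
      by (rule onorm) simp
    ultimately show ?thesis by simp
  qed
  ultimately have "onorm (\<lambda>x. (U ** D ** cadj V) *v x) = m" by (rule antisym)
  thus ?thesis unfolding op_norm_def D_def m_def .
qed


lemma mm_add_r: "((A::complex^'n^'n) + B) ** C = A ** C + B ** C"
  by (simp add: matrix_matrix_mult_def vec_eq_iff sum.distrib algebra_simps)
lemma mm_diff_r: "((A::complex^'n^'n) - B) ** C = A ** C - B ** C"
  by (simp add: matrix_matrix_mult_def vec_eq_iff sum_subtractf algebra_simps)
lemma mm_diff_l: "(C::complex^'n^'n) ** (A - B) = C ** A - C ** B"
  by (simp add: matrix_matrix_mult_def vec_eq_iff sum_subtractf algebra_simps)
lemma cadj_diff: "cadj (A - B) = cadj A - cadj B"
  by (simp add: cadj_def vec_eq_iff)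

lemma cadj_diag_real: "cadj (diagm (\<lambda>i. complex_of_real (d i))) = diagm (\<lambda>i. complex_of_real (d i))"
  by (simp add: cadj_def diagm_def vec_eq_iff)

lemma mult_diag_right: "M ** diagm b = (\<chi> i j. M$i$j * b j)"
proof -
  have "(\<Sum>k\<in>UNIV. M$i$k * (if k = j then b k else 0)) = M$i$j * b j" for i j
  proof -
    have "(\<Sum>k\<in>UNIV. M$i$k * (if k = j then b k else 0)) = (\<Sum>k\<in>UNIV. if k = j then M$i$k * b k else 0)"
      by (rule sum.cong) auto
    thus ?thesis by simp
  qed
  thus ?thesis by (simp add: matrix_matrix_mult_def diagm_def vec_eq_iff)
qed

lemma mult_diag_left: "diagm a ** M = (\<chi> i j. a i * M$i$j)"
proof -
  have "(\<Sum>k\<in>UNIV. (if i = k then a i else 0) * M$k$j) = a i * M$i$j" for i j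
  proof -
    have "(\<Sum>k\<in>UNIV. (if i = k then a i else 0) * M$k$j) = (\<Sum>k\<in>UNIV. if i = k then a i * M$k$j else 0)"
      by (rule sum.cong) auto
    thus ?thesis by simp
  qed
  thus ?thesis by (simp add: matrix_matrix_mult_def diagm_def vec_eq_iff)
qed

lemma diag_mult: "diagm a ** diagm b = diagm (\<lambda>i. a i * b i)"
  unfolding mult_diag_right by (simp add: diagm_def vec_eq_iff)

lemma cinner_diag: "cinner x (diagm (\<lambda>i. complex_of_real (d i)) *v x) =
    complex_of_real (\<Sum>i\<in>UNIV. d i * (cmod (x$i))^2)"
proof -
  have t: "cnj (x$i) * (complex_of_real (d i) * x$i) = complex_of_real (d i * (cmod (x$i))^2)" for i
  proof -
    have "cnj (x$i) * (complex_of_real (d i) * x$i) = complex_of_real (d i) * (x$i * cnj (x$i))"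
      by (simp add: mult_ac)
    also have "\<dots> = complex_of_real (d i) * complex_of_real ((cmod (x$i))^2)"
      by (simp only: complex_norm_square)
    also have "\<dots> = complex_of_real (d i * (cmod (x$i))^2)" by (simp only: of_real_mult)
    finally show ?thesis .
  qed
  have "cinner x (diagm (\<lambda>i. complex_of_real (d i)) *v x) = (\<Sum>i\<in>UNIV. complex_of_real (d i * (cmod (x$i))^2))"
    unfolding cinner_def diag_mv vec_lambda_beta using t by (intro sum.cong refl) 
  thus ?thesis by (simp only: of_real_sum)
qed

lemma psd_quad: "psd P \<longleftrightarrow> cadj P = P \<and> (\<forall>x. Re (cinner x (P *v x)) \<ge> 0)"
  unfolding psd_def cinner_def ..

lemma psd_diag: "\<forall>i. d i \<ge> 0 \<Longrightarrow> psd (diagm (\<lambda>i. complex_of_real (d i)))"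
  unfolding psd_quad cadj_diag_real cinner_diag by (simp add: sum_nonneg)

lemma psd_conj: "psd Q \<Longrightarrow> psd (cadj W ** Q ** W)"
proof -
  assume Q: "psd Q"
  have "cadj (cadj W ** Q ** W) = cadj W ** Q ** W"
    using Q by (simp add: psd_quad cadj_mult matrix_mul_assoc)
  moreover have "cinner x ((cadj W ** Q ** W) *v x) = cinner (W *v x) (Q *v (W *v x))" for x
    by (simp add: matrix_vector_mul_assoc[symmetric] cinner_mv)
  ultimately show ?thesis using Q by (simp add: psd_quad)
qed

lemma sqrt_unique_core:
  fixes Q :: "complex^'n^'n" and d :: "'n \<Rightarrow> real"
  assumes Q: "psd Q" and d: "\<forall>i. d i \<ge> 0"
    and QQ: "Q ** Q = diagm (\<lambda>i. complex_of_real (d i)) ** diagm (\<lambda>i. complex_of_real (d i))"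
  shows "Q = diagm (\<lambda>i. complex_of_real (d i))"
proof -
  define D where "D = diagm (\<lambda>i. complex_of_real (d i))"
  have hQ: "cadj Q = Q" using Q by (simp add: psd_quad)
  have hD: "cadj D = D" unfolding D_def by (rule cadj_diag_real)
  have "Q ** (Q ** Q) = (Q ** Q) ** Q" by (rule matrix_mul_assoc)
  hence c2: "Q ** (D ** D) = (D ** D) ** Q" using QQ unfolding D_def by simp
  have DD: "D ** D = diagm (\<lambda>i. complex_of_real (d i * d i))" unfolding D_def diag_mult by simp
  have entry: "Q$i$j * complex_of_real (d j) = complex_of_real (d i) * Q$i$j" for i j
  proof -
    from c2 have "(Q ** (D ** D))$i$j = ((D ** D) ** Q)$i$j" by simp
    hence e: "Q$i$j * complex_of_real (d j * d j) = complex_of_real (d i * d i) * Q$i$j"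
      unfolding DD mult_diag_right mult_diag_left by simp
    show ?thesis
    proof (cases "Q$i$j = 0")
      case True thus ?thesis by simp
    next
      case False
      hence "complex_of_real (d j * d j) = complex_of_real (d i * d i)" using e by (simp add: mult.commute)
      hence "d j * d j = d i * d i" by (simp only: of_real_eq_iff)
      hence "sqrt (d j * d j) = sqrt (d i * d i)" by simp
      hence "\<bar>d j\<bar> = \<bar>d i\<bar>" by (simp only: real_sqrt_abs2)
      hence "d j = d i" using d by simp
      thus ?thesis by (simp add: mult.commute)
    qed
  qed
  have QD: "Q ** D = D ** Q"
    unfolding D_def mult_diag_right mult_diag_left using entry by (simp add: vec_eq_iff)
  define R where "R = Q - D"
  define T where "T = Q + D"
  have TR: "T ** R = 0"
    unfolding T_def R_def mm_diff_l mm_add_r using QD QQ unfolding D_def by (simp add: algebra_simps)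
  have hR: "cadj R = R" unfolding R_def cadj_diff hQ hD ..
  have RR: "R *v (R *v x) = 0" for x
  proof -
    define y where "y = R *v x"
    have Ty: "T *v y = 0" unfolding y_def by (simp add: matrix_vector_mul_assoc TR)
    hence "Q *v y + D *v y = 0" unfolding T_def by (simp add: matrix_vector_mult_add_rdistrib)
    hence "cinner y (Q *v y) + cinner y (D *v y) = 0" by (metis cinner_add_right cinner_zero_right)
    hence sum0: "Re (cinner y (Q *v y)) + Re (cinner y (D *v y)) = 0" by (metis plus_complex.sel(1) zero_complex.sel(1))
    have q0: "Re (cinner y (Q *v y)) \<ge> 0" using Q by (simp add: psd_quad)
    have d0: "Re (cinner y (D *v y)) = (\<Sum>i\<in>UNIV. d i * (cmod (y$i))^2)" unfolding D_def cinner_diag by simp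
    have nn: "\<forall>i\<in>UNIV. d i * (cmod (y$i))^2 \<ge> 0" using d by simp
    have "(\<Sum>i\<in>UNIV. d i * (cmod (y$i))^2) \<ge> 0" using nn by (simp add: sum_nonneg)
    hence "(\<Sum>i\<in>UNIV. d i * (cmod (y$i))^2) = 0" using sum0 q0 d0 by linarith
    hence "\<forall>i\<in>UNIV. d i * (cmod (y$i))^2 = 0" using nn by (simp add: sum_nonneg_eq_0_iff)
    hence "complex_of_real (d i) * y$i = 0" for i by auto
    hence Dy: "D *v y = 0" unfolding D_def diag_mv by (simp add: vec_eq_iff)
    hence Qy: "Q *v y = 0" using \<open>Q *v y + D *v y = 0\<close> by simp
    have "R *v y = 0" unfolding R_def using Dy Qy by (simp add: matrix_vector_mult_diff_rdistrib)
    thus ?thesis unfolding y_def .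
  qed
  have "R *v x = 0" for x
  proof -
    have "cinner (R *v x) (R *v x) = cinner x (cadj R *v (R *v x))" by (simp add: cinner_mv)
    also have "\<dots> = 0" unfolding hR RR by simp
    finally show ?thesis by (simp add: cinner_self_eq0)
  qed
  hence "R = 0" by (simp add: matrix_eq)
  thus ?thesis unfolding R_def D_def by simp
qed

lemma conj_mult:
  assumes V: "unitary V"
  shows "(X ** Y ** cadj V) ** (V ** Z ** W) = X ** Y ** Z ** W"
proof -
  have "(X ** Y ** cadj V) ** (V ** Z ** W) = X ** Y ** (cadj V ** V) ** Z ** W"
    by (simp add: matrix_mul_assoc)
  also have "\<dots> = X ** Y ** Z ** W" by (simp add: unitary_left[OF V])
  finally show ?thesis .
qed

lemma psd_sqrt_unique:
  fixes V :: "complex^'n^'n" and d :: "'n \<Rightarrow> real"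
  assumes V: "unitary V" and d: "\<forall>i. d i \<ge> 0" and Q: "psd Q"
    and QQ: "Q ** Q = (V ** diagm (\<lambda>i. complex_of_real (d i)) ** cadj V) ** (V ** diagm (\<lambda>i. complex_of_real (d i)) ** cadj V)"
  shows "Q = V ** diagm (\<lambda>i. complex_of_real (d i)) ** cadj V"
proof -
  define D where "D = diagm (\<lambda>i. complex_of_real (d i))"
  define Q' where "Q' = cadj V ** Q ** V"
  have pQ': "psd Q'" unfolding Q'_def by (rule psd_conj[OF Q])
  have "Q' ** Q' = cadj V ** Q ** (V ** cadj V) ** Q ** V" unfolding Q'_def by (simp add: matrix_mul_assoc)
  also have "\<dots> = cadj V ** (Q ** Q) ** V" by (simp add: unitary_right[OF V] matrix_mul_assoc)
  also have "\<dots> = cadj V ** (V ** D ** D ** cadj V) ** V"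
    unfolding QQ D_def[symmetric] conj_mult[OF V] ..
  also have "\<dots> = (cadj V ** V) ** D ** D ** (cadj V ** V)" by (simp add: matrix_mul_assoc)
  also have "\<dots> = D ** D" by (simp add: unitary_left[OF V])
  finally have "Q' = D" unfolding D_def by (rule sqrt_unique_core[OF pQ' d])
  hence "V ** Q' ** cadj V = V ** D ** cadj V" by simp
  moreover have "V ** Q' ** cadj V = Q"
  proof -
    have "V ** Q' ** cadj V = (V ** cadj V) ** Q ** (V ** cadj V)" unfolding Q'_def by (simp add: matrix_mul_assoc)
    thus ?thesis by (simp add: unitary_right[OF V])
  qed
  ultimately show ?thesis unfolding D_def by simp
qed


lemma trace_norm_svd:
  fixes s :: "'n::finite \<Rightarrow> real"
  assumes U: "unitary U" and V: "unitary V" and s: "\<forall>i. s i \<ge> 0"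
  shows "trace_norm (U ** diagm (\<lambda>i. complex_of_real (s i)) ** cadj V) = (\<Sum>i\<in>UNIV. s i)"
proof -
  define D where "D = diagm (\<lambda>i. complex_of_real (s i))"
  define A where "A = U ** D ** cadj V"
  define P where "P = V ** D ** cadj V"
  have hD: "cadj D = D" unfolding D_def by (rule cadj_diag_real)
  have pP: "psd P"
    using psd_conj[OF psd_diag[OF s], of "cadj V"] unfolding P_def D_def by simp
  have cA: "cadj A = V ** D ** cadj U" unfolding A_def by (simp add: cadj_mult hD matrix_mul_assoc)
  have AA: "cadj A ** A = V ** D ** D ** cadj V"
  proof -
    have "cadj A ** A = (V ** D ** cadj U) ** (U ** D ** cadj V)" by (subst cA) (simp add: A_def)
    also have "\<dots> = V ** D ** D ** cadj V" by (rule conj_mult[OF U])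
    finally show ?thesis .
  qed
  have PP: "P ** P = V ** D ** D ** cadj V" unfolding P_def by (rule conj_mult[OF V])
  have "mabs A = P" unfolding mabs_def
  proof (rule the_equality)
    show "psd P \<and> P ** P = cadj A ** A" using pP AA PP by simp
  next
    fix Q assume "psd Q \<and> Q ** Q = cadj A ** A"
    hence Q: "psd Q" "Q ** Q = P ** P" using AA PP by auto
    show "Q = P" unfolding P_def D_def
      by (rule psd_sqrt_unique[OF V s Q(1)]) (use Q(2) in \<open>simp add: P_def D_def\<close>)
  qed
  moreover have "trace P = trace D"
  proof -
    have "trace P = trace (V ** (D ** cadj V))" unfolding P_def by (simp add: matrix_mul_assoc)
    also have "\<dots> = trace ((D ** cadj V) ** V)" by (rule trace_mul_sym)
    also have "\<dots> = trace (D ** (cadj V ** V))" by (simp add: matrix_mul_assoc)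
    also have "\<dots> = trace D" by (simp add: unitary_left[OF V])
    finally show ?thesis .
  qed
  moreover have "trace D = complex_of_real (\<Sum>i\<in>UNIV. s i)"
    unfolding D_def trace_def diagm_def by (simp add: of_real_sum)
  ultimately show ?thesis unfolding trace_norm_def A_def D_def by simp
qed

definition emat :: "'n::finite \<Rightarrow> 'n \<Rightarrow> complex^'n^'n" where
  "emat a b = (\<chi> r c. if r = a \<and> c = b then 1 else 0)"

lemma emat_left: "emat a b ** M = (\<chi> r t. if r = a then M$b$t else 0)"
proof -
  have "(\<Sum>k\<in>UNIV. (if r = a \<and> k = b then 1 else 0) * M$k$t) = (if r = a then M$b$t else 0)" for r t
  proof (cases "r = a")
    case True
    have "(\<Sum>k\<in>UNIV. (if r = a \<and> k = b then 1 else 0) * M$k$t) = (\<Sum>k\<in>UNIV. if k = b then M$k$t else 0)"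
      using True by (intro sum.cong) auto
    thus ?thesis using True by simp
  qed simp
  thus ?thesis by (simp add: emat_def matrix_matrix_mult_def vec_eq_iff)
qed

lemma emat_right: "M ** emat c e = (\<chi> r t. if t = e then M$r$c else 0)"
proof -
  have "(\<Sum>k\<in>UNIV. M$r$k * (if k = c \<and> t = e then 1 else 0)) = (if t = e then M$r$c else 0)" for r t
  proof (cases "t = e")
    case True
    have "(\<Sum>k\<in>UNIV. M$r$k * (if k = c \<and> t = e then 1 else 0)) = (\<Sum>k\<in>UNIV. if k = c then M$r$k else 0)"
      using True by (intro sum.cong) auto
    thus ?thesis using True by simp
  qed simp
  thus ?thesis by (simp add: emat_def matrix_matrix_mult_def vec_eq_iff)
qed

lemma emat_sandwich: "emat a b ** M ** emat c e = cscale (M$b$c) (emat a e)"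
  unfolding emat_right emat_left by (simp add: cscale_def emat_def vec_eq_iff)

lemma emat_mult: "emat a b ** emat c e = (if b = c then emat a e else 0)"
  unfolding emat_left by (auto simp: emat_def vec_eq_iff)

lemma cadj_emat: "cadj (emat a b) = emat b a"
  by (auto simp: cadj_def emat_def vec_eq_iff)

lemma sum_entry: "(\<Sum>k\<in>F. f k) $ i $ j = (\<Sum>k\<in>F. f k $ i $ j)"
  by (simp add: sum_component)

lemma sum_emat: "(\<Sum>k\<in>UNIV. emat k k) = (mat 1 :: complex^'n^'n)"
proof -
  have "(\<Sum>k\<in>UNIV. (if i = k \<and> j = k then 1 else 0)) = (if i = j then (1::complex) else 0)" for i j :: 'n
  proof (cases "i = j")
    case True
    have "(\<Sum>k\<in>UNIV. (if i = k \<and> j = k then 1 else 0)) = (\<Sum>k\<in>UNIV. if k = i then (1::complex) else 0)"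
      using True by (intro sum.cong) auto
    thus ?thesis using True by simp
  next
    case False thus ?thesis by (simp add: sum.neutral)
  qed
  thus ?thesis by (simp add: vec_eq_iff sum_entry emat_def mat_def)
qed

lemma diag_sum:
  fixes d :: "'n::finite \<Rightarrow> complex"
  shows "(\<Sum>k\<in>UNIV. cscale (d k) (emat k k)) = diagm d"
proof -
  have "(\<Sum>k\<in>UNIV. d k * (if i = k \<and> j = k then 1 else 0)) = (if i = j then d i else 0)" for i j :: 'n
  proof (cases "i = j")
    case True
    have "(\<Sum>k\<in>UNIV. d k * (if i = k \<and> j = k then 1 else 0)) = (\<Sum>k\<in>UNIV. if k = i then d k else 0)"
      using True by (intro sum.cong) auto
    thus ?thesis using True by simp
  next
    case False thus ?thesis by (simp add: sum.neutral)
  qed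
  thus ?thesis by (simp add: vec_eq_iff sum_entry emat_def diagm_def cscale_def)
qed

lemma cscale_mat1: "cscale c (mat 1) = diagm (\<lambda>_. c)"
  by (simp add: cscale_def mat_def diagm_def vec_eq_iff)

lemma emat_nz: "emat a a \<noteq> 0"
proof
  assume "emat a a = 0"
  hence "emat a a $ a $ a = 0" by simp
  thus False by (simp add: emat_def)
qed

lemma N_zero: "is_matrix_norm N \<Longrightarrow> N 0 = 0"
  by (simp add: is_matrix_norm_def)

lemma N_sum: "is_matrix_norm N \<Longrightarrow> N (\<Sum>k\<in>F. f k) \<le> (\<Sum>k\<in>F. N (f k))"
proof (induction F rule: infinite_finite_induct)
  case (infinite F) thus ?case by (simp add: N_zero)
next
  case empty thus ?case by (simp add: N_zero)
next
  case (insert x F)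
  have "N (\<Sum>k\<in>insert x F. f k) = N (f x + (\<Sum>k\<in>F. f k))" using insert by simp
  also have "\<dots> \<le> N (f x) + N (\<Sum>k\<in>F. f k)" using insert(4) by (simp add: is_matrix_norm_def)
  also have "\<dots> \<le> N (f x) + (\<Sum>k\<in>F. N (f k))" using insert by simp
  finally show ?case using insert by simp
qed

lemma N_cscale: "is_matrix_norm N \<Longrightarrow> N (cscale c A) = cmod c * N A"
  by (simp add: is_matrix_norm_def)

lemma enum_bij: obtains g :: "nat \<Rightarrow> 'n::finite" where "bij_betw g {..<CARD('n)} UNIV"
proof -
  obtain h :: "nat \<Rightarrow> 'n" where h: "bij_betw h {0..<card (UNIV::'n set)} UNIV"
    using ex_bij_betw_nat_finite[of "UNIV::'n set"] by auto
  have "bij_betw h {..<CARD('n)} UNIV" using h by (simp add: atLeast0LessThan)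
  thus ?thesis by (rule that)
qed


lemma mat1_nz: "(mat 1 :: complex^'n^'n) \<noteq> 0"
proof
  assume "(mat 1 :: complex^'n^'n) = 0"
  hence "(mat 1 :: complex^'n^'n) $ undefined $ undefined = 0" by simp
  thus False by (simp add: mat_def)
qed

lemma N_pos: "is_matrix_norm N \<Longrightarrow> A \<noteq> 0 \<Longrightarrow> N A > 0"
  unfolding is_matrix_norm_def by (metis less_eq_real_def)

lemma N_diag_const: "is_matrix_norm N \<Longrightarrow> N (diagm (\<lambda>_. complex_of_real r)) = \<bar>r\<bar> * N (mat 1)"
  by (simp add: cscale_mat1[symmetric] N_cscale)

lemma sandwich_diag: "emat a b ** diagm (\<lambda>i. d i) ** emat b a = cscale (d b) (emat a a)"
  unfolding emat_sandwich by (simp add: diagm_def)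

lemma part1:
  fixes N :: "complex^'n^'n \<Rightarrow> real"
  assumes nm: "is_matrix_norm N" and ui: "unitarily_invariant N" and M: "M_norm N"
  shows "\<exists>\<alpha>>0. \<forall>A. N A = \<alpha> * op_norm A"
proof -
  define \<alpha> where "\<alpha> = N (mat 1)"
  have apos: "\<alpha> > 0" unfolding \<alpha>_def by (rule N_pos[OF nm mat1_nz])
  obtain g :: "nat \<Rightarrow> 'n" where g: "bij_betw g {..<CARD('n)} UNIV" by (rule enum_bij)
  define k where "k = CARD('n)"
  have kpos: "0 < k" by (simp add: k_def)
  have reidx: "(\<Sum>i<k. F (g i)) = (\<Sum>j\<in>UNIV. F j)" for F :: "'n \<Rightarrow> complex^'n^'n"
    using sum.reindex_bij_betw[OF g, of F] unfolding k_def by simp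
  have Mrule: "N (\<Sum>i<k. cadj (C i) ** X i ** C i) \<le> Max ((\<lambda>i. N (X i)) ` {..<k})"
    if "(\<Sum>i<k. cadj (C i) ** C i) = mat 1" for C X
    using M that unfolding M_norm_def by blast
  have fin: "finite ((\<lambda>i. N (X i)) ` {..<k})" and ne: "(\<lambda>i. N (X i)) ` {..<k} \<noteq> {}" for X :: "nat \<Rightarrow> complex^'n^'n"
    using kpos by auto
  show ?thesis
  proof (intro exI[of _ \<alpha>] conjI allI)
    show "\<alpha> > 0" by (rule apos)
    fix A :: "complex^'n^'n"
    obtain U V s where U: "unitary U" and V: "unitary V" and s: "\<forall>i. s i \<ge> 0"
      and A: "A = U ** diagm (\<lambda>i. complex_of_real (s i)) ** cadj V"
      using svd[of A] by blast
    define D where "D = diagm (\<lambda>i. complex_of_real (s i))"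
    have NA: "N A = N D" unfolding A D_def using ui unitary_cadj[OF V] U
      unfolding unitarily_invariant_def by blast
    define m where "m = Max (range s)"
    have opA: "op_norm A = m" unfolding A m_def by (rule op_norm_svd[OF U V s])
    have sm: "s i \<le> m" for i unfolding m_def by simp
    have m0: "m \<ge> 0" using s sm by (meson order_trans)
    have "Max (range s) \<in> range s" by (rule Max_in) auto
    then obtain j where "Max (range s) = s j" by (rule rangeE)
    hence j: "s j = m" unfolding m_def by simp
    define C1 where "C1 i = emat (g i) (g i)" for i
    define X1 where "X1 i = (diagm (\<lambda>_. complex_of_real (s (g i))) :: complex^'n^'n)" for i
    have c1: "(\<Sum>i<k. cadj (C1 i) ** C1 i) = mat 1"
      unfolding C1_def cadj_emat emat_mult using reidx[of "\<lambda>j. emat j j"] by (simp add: sum_emat)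
    have x1: "(\<Sum>i<k. cadj (C1 i) ** X1 i ** C1 i) = D"
    proof -
      have "cadj (C1 i) ** X1 i ** C1 i = cscale (complex_of_real (s (g i))) (emat (g i) (g i))" for i
        unfolding C1_def X1_def cadj_emat emat_sandwich by (simp add: diagm_def)
      hence "(\<Sum>i<k. cadj (C1 i) ** X1 i ** C1 i) = (\<Sum>j\<in>UNIV. cscale (complex_of_real (s j)) (emat j j))"
        using reidx[of "\<lambda>j. cscale (complex_of_real (s j)) (emat j j)"] by simp
      thus ?thesis unfolding D_def diag_sum .
    qed
    have "N D \<le> Max ((\<lambda>i. N (X1 i)) ` {..<k})" using Mrule[OF c1, of X1] unfolding x1 .
    also have "\<dots> \<le> \<alpha> * m"
    proof (subst Max_le_iff[OF fin ne], intro ballI)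
      fix y assume "y \<in> (\<lambda>i. N (X1 i)) ` {..<k}"
      then obtain i where "y = N (X1 i)" by blast
      hence "y = s (g i) * \<alpha>" unfolding X1_def \<alpha>_def using N_diag_const[OF nm] s by simp
      thus "y \<le> \<alpha> * m" using sm[of "g i"] apos by (simp add: mult.commute)
    qed
    finally have up: "N D \<le> \<alpha> * m" .
    define C2 where "C2 i = emat j (g i)" for i
    have c2: "(\<Sum>i<k. cadj (C2 i) ** C2 i) = mat 1"
      unfolding C2_def cadj_emat emat_mult using reidx[of "\<lambda>j. emat j j"] by (simp add: sum_emat)
    have x2: "(\<Sum>i<k. cadj (C2 i) ** D ** C2 i) = diagm (\<lambda>_. complex_of_real m)"
    proof -
      have "cadj (C2 i) ** D ** C2 i = cscale (complex_of_real m) (emat (g i) (g i))" for i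
        unfolding C2_def cadj_emat emat_sandwich D_def using j by (simp add: diagm_def)
      hence "(\<Sum>i<k. cadj (C2 i) ** D ** C2 i) = (\<Sum>j\<in>UNIV. cscale (complex_of_real m) (emat j j))"
        using reidx[of "\<lambda>j. cscale (complex_of_real m) (emat j j)"] by simp
      thus ?thesis using diag_sum[of "\<lambda>_. complex_of_real m"] by simp
    qed
    have "N (diagm (\<lambda>_. complex_of_real m)) \<le> Max ((\<lambda>i. N D) ` {..<k})"
      using Mrule[OF c2, of "\<lambda>_. D"] unfolding x2 .
    also have "(\<lambda>i. N D) ` {..<k} = {N D}" using kpos by auto
    finally have lo: "m * \<alpha> \<le> N D" using N_diag_const[OF nm] m0 unfolding \<alpha>_def by simp
    show "N A = \<alpha> * op_norm A" using up lo NA opA by (simp add: mult.commute)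
  qed
qed


lemma part2:
  fixes N :: "complex^'n^'n \<Rightarrow> real"
  assumes nm: "is_matrix_norm N" and ui: "unitarily_invariant N" and L: "L_norm N"
  shows "\<exists>\<alpha>>0. \<forall>A. N A = \<alpha> * trace_norm A"
proof -
  obtain g :: "nat \<Rightarrow> 'n" where g: "bij_betw g {..<CARD('n)} UNIV" by (rule enum_bij)
  define k where "k = CARD('n)"
  have reidx: "(\<Sum>i<k. F (g i)) = (\<Sum>j\<in>UNIV. F j)" for F :: "'n \<Rightarrow> complex^'n^'n"
    using sum.reindex_bij_betw[OF g, of F] unfolding k_def by simp
  have reidxR: "(\<Sum>i<k. F (g i)) = (\<Sum>j\<in>UNIV. F j)" for F :: "'n \<Rightarrow> real"
    using sum.reindex_bij_betw[OF g, of F] unfolding k_def by simp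
  have Lrule: "(\<Sum>i<k. N (C i ** X ** cadj (C i))) \<le> N X"
    if "(\<Sum>i<k. cadj (C i) ** C i) = mat 1" for C X
    using L that unfolding L_norm_def by blast
  have Nle: "N (emat i i) \<le> N (emat j j)" for i j
  proof -
    define \<sigma> where "\<sigma> q = (if q = i then j else if q = j then i else q)" for q
    have ss: "\<sigma> (\<sigma> q) = q" for q unfolding \<sigma>_def by auto
    have bs: "bij_betw \<sigma> UNIV UNIV" by (rule bij_betw_byWitness[of UNIV \<sigma> \<sigma>]) (auto simp: ss)
    define C where "C r = emat (g r) (\<sigma> (g r))" for r
    have c: "(\<Sum>r<k. cadj (C r) ** C r) = mat 1"
    proof -
      have "(\<Sum>r<k. cadj (C r) ** C r) = (\<Sum>q\<in>UNIV. emat (\<sigma> q) (\<sigma> q))"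
        unfolding C_def cadj_emat emat_mult using reidx[of "\<lambda>q. emat (\<sigma> q) (\<sigma> q)"] by simp
      also have "\<dots> = (\<Sum>q\<in>UNIV. emat q q)" by (rule sum.reindex_bij_betw[OF bs])
      finally show ?thesis by (simp add: sum_emat)
    qed
    have t: "N (C r ** emat j j ** cadj (C r)) = (if \<sigma> (g r) = j then N (emat (g r) (g r)) else 0)" for r
    proof -
      have "C r ** emat j j ** cadj (C r) = cscale (emat j j $ \<sigma> (g r) $ \<sigma> (g r)) (emat (g r) (g r))"
        unfolding C_def cadj_emat emat_sandwich ..
      thus ?thesis by (simp add: N_cscale[OF nm] emat_def)
    qed
    have "(\<Sum>r<k. N (C r ** emat j j ** cadj (C r))) = (\<Sum>q\<in>UNIV. if \<sigma> q = j then N (emat q q) else 0)"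
      unfolding t using reidxR[of "\<lambda>q. if \<sigma> q = j then N (emat q q) else 0"] by simp
    also have "\<dots> = (\<Sum>q\<in>UNIV. if q = i then N (emat q q) else 0)"
    proof (rule sum.cong[OF refl])
      fix q
      have "\<sigma> q = j \<longleftrightarrow> q = i" using ss by (metis \<sigma>_def)
      thus "(if \<sigma> q = j then N (emat q q) else 0) = (if q = i then N (emat q q) else 0)" by simp
    qed
    also have "\<dots> = N (emat i i)" by simp
    finally show ?thesis using Lrule[OF c, of "emat j j"] by simp
  qed
  define \<beta> where "\<beta> = N (emat undefined undefined)"
  have Nemat: "N (emat i i) = \<beta>" for i unfolding \<beta>_def using Nle by (meson antisym)
  have bpos: "\<beta> > 0" unfolding \<beta>_def by (rule N_pos[OF nm emat_nz])
  show ?thesis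
  proof (intro exI[of _ \<beta>] conjI allI)
    show "\<beta> > 0" by (rule bpos)
    fix A :: "complex^'n^'n"
    obtain U V s where U: "unitary U" and V: "unitary V" and s: "\<forall>i. s i \<ge> 0"
      and A: "A = U ** diagm (\<lambda>i. complex_of_real (s i)) ** cadj V"
      using svd[of A] by blast
    define D where "D = diagm (\<lambda>i. complex_of_real (s i))"
    have NA: "N A = N D" unfolding A D_def using ui unitary_cadj[OF V] U
      unfolding unitarily_invariant_def by blast
    have tA: "trace_norm A = (\<Sum>i\<in>UNIV. s i)" unfolding A by (rule trace_norm_svd[OF U V s])
    have Nt: "N (cscale (complex_of_real (s q)) (emat q q)) = s q * \<beta>" for q
      using s by (simp add: N_cscale[OF nm] Nemat)
    have "N D = N (\<Sum>q\<in>UNIV. cscale (complex_of_real (s q)) (emat q q))"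
      unfolding D_def diag_sum ..
    also have "\<dots> \<le> (\<Sum>q\<in>UNIV. N (cscale (complex_of_real (s q)) (emat q q)))" by (rule N_sum[OF nm])
    also have "\<dots> = (\<Sum>q\<in>UNIV. s q * \<beta>)" unfolding Nt ..
    finally have up: "N D \<le> (\<Sum>q\<in>UNIV. s q * \<beta>)" .
    define C where "C r = emat (g r) (g r)" for r
    have c: "(\<Sum>r<k. cadj (C r) ** C r) = mat 1"
      unfolding C_def cadj_emat emat_mult using reidx[of "\<lambda>j. emat j j"] by (simp add: sum_emat)
    have "C r ** D ** cadj (C r) = cscale (complex_of_real (s (g r))) (emat (g r) (g r))" for r
      unfolding C_def cadj_emat emat_sandwich D_def by (simp add: diagm_def)
    hence "(\<Sum>r<k. N (C r ** D ** cadj (C r))) = (\<Sum>q\<in>UNIV. s q * \<beta>)"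
      using Nt reidxR[of "\<lambda>q. s q * \<beta>"] by simp
    hence lo: "(\<Sum>q\<in>UNIV. s q * \<beta>) \<le> N D" using Lrule[OF c, of D] by simp
    show "N A = \<beta> * trace_norm A" using up lo NA tA by (simp add: sum_distrib_left mult.commute)
  qed
qed

theorem corollary2p10:
  fixes N :: "complex^'n^'n \<Rightarrow> real"
  assumes "is_matrix_norm N" and "unitarily_invariant N"
  shows "(M_norm N \<longrightarrow> (\<exists>\<alpha>>0. \<forall>A. N A = \<alpha> * op_norm A)) \<and>
         (L_norm N \<longrightarrow> (\<exists>\<alpha>>0. \<forall>A. N A = \<alpha> * trace_norm A))"
  using part1[OF assms] part2[OF assms] by blast

end
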